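(* Let $s\ge 2$. There exists a constant $c>0$ (depending on $s$) such that $A(L,\mathbf 0)=O(2^{-cL})$ as $L\to\infty$; that is, $\|t\|_{U^s[2^L]}^{2^s}=O(2^{-cL})$.
   Context: Let $t(n)=(-1)^{s_2(n)}$ be the Thue-Morse sequence ($s_2$ = binary digit sum). Write $[M]=\{0,\dots,M-1\}$ and $\omega\cdot\mathbf h=\sum_{i=1}^s\omega_ih_i$. $A(L,\mathbf 0)=\mathbb{E}_{n,\mathbf h}\prod_{\omega\in\{0,1\}^s}t(n+\omega\cdot\mathbf h)$, the expectation over all $n\in\mathbb{Z}$, $\mathbf h\in\mathbb{Z}^s$ with $\{n+\omega\cdot\mathbf h:\omega\in\{0,1\}^s\}\subset[2^L]$; this equals $\|t\|_{U^s[2^L]}^{2^s}$, the $2^s$-th power of the Gowers $U^s$ norm of $t$ on $[2^L]$. *)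

theory Defs
  imports Main "HOL-Library.FuncSet" "HOL-Library.Landau_Symbols"
begin

fun binsum :: "nat \<Rightarrow> nat" where
  "binsum n = (if n = 0 then 0 else n mod 2 + binsum (n div 2))"

text \<open>Thue-Morse sequence t(n) = (-1)^(s_2 n); only evaluated on [2^L] below,
  negative arguments never occur.\<close>
definition thue_morse :: "int \<Rightarrow> real" where
  "thue_morse n = (-1) ^ binsum (nat n)"

text \<open>omega in {0,1}^s is represented by a subset w of {0..<s};
  omega . h = sum of h i over i in w. h in Z^s is a function in {0..<s} ->_E UNIV.\<close>
definition cube_configs :: "nat \<Rightarrow> nat \<Rightarrow> (int \<times> (nat \<Rightarrow> int)) set" where
  "cube_configs s L = {(n, h). h \<in> {0..<s} \<rightarrow>\<^sub>E (UNIV :: int set) \<and>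
      (\<forall>w \<in> Pow {0..<s}. n + (\<Sum>i\<in>w. h i) \<in> {0..<2 ^ L})}"

definition gowers_A :: "nat \<Rightarrow> nat \<Rightarrow> real" where
  "gowers_A s L = (\<Sum>(n, h)\<in>cube_configs s L.
       \<Prod>w\<in>Pow {0..<s}. thue_morse (n + (\<Sum>i\<in>w. h i))) / real (card (cube_configs s L))"

end

theory Submission
  imports Defs "HOL-Library.Landau_Symbols"
begin


declare binsum.simps[simp del]

lemma binsum_eq: "binsum n = n mod 2 + binsum (n div 2)"
  by (cases "n = 0") (simp_all add: binsum.simps[of n] binsum.simps[of 0])

lemma binsum_split: "b < 2^j \<Longrightarrow> binsum (2^j * a + b) = binsum a + binsum b"
proof (induction j arbitrary: b)
  case 0
  then show ?case by (simp add: binsum.simps[of 0])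
next
  case (Suc j)
  have m: "(2^Suc j * a + b) mod 2 = b mod 2"
    by (metis add.commute mod_mult_self2 mult.assoc power_Suc)
  have d: "(2^Suc j * a + b) div 2 = 2^j * a + b div 2" by simp
  have "b div 2 < 2^j" using Suc.prems by auto
  then have "binsum (2^j * a + b div 2) = binsum a + binsum (b div 2)" using Suc.IH by blast
  then show ?case
    using binsum_eq[of "2^Suc j * a + b"] binsum_eq[of b] m d by simp
qed

definition tn :: "nat \<Rightarrow> real" where "tn n = (-1) ^ binsum n"

lemma tm_int: "thue_morse (int n) = tn n"
  by (simp add: thue_morse_def tn_def)

lemma tn_split: "b < 2^j \<Longrightarrow> tn (2^j * a + b) = tn a * tn b"
  by (simp add: tn_def binsum_split power_add)

lemma tn_abs[simp]: "\<bar>tn n\<bar> = 1" by (simp add: tn_def)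
lemma tm_abs[simp]: "\<bar>thue_morse x\<bar> = 1" by (simp add: thue_morse_def)
lemma tn_sq[simp]: "tn n * tn n = 1" by (simp add: tn_def flip: power_add)

lemma tn_0[simp]: "tn 0 = 1" by (simp add: tn_def binsum.simps[of 0])
lemma tn_Suc0[simp]: "tn (Suc 0) = -1" by (simp add: tn_def binsum.simps[of "Suc 0"] binsum.simps[of 0])
lemma tn_1[simp]: "tn 1 = -1" using tn_Suc0 by simp

lemma tn_pow2: "tn (2^p) = -1"
  using tn_split[of 0 p 1] by simp

lemma tn_add_pow2: "x < 2^p \<Longrightarrow> tn (x + 2^p) = - tn x"
  using tn_split[of x p 1] by (simp add: add.commute)

lemma abs_prod_tn: "\<bar>\<Prod>i\<in>I. tn (f i)\<bar> = 1"
  by (induction I rule: infinite_finite_induct) (auto simp: abs_mult)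

lemma prod_tn_cases: "(\<Prod>i\<in>I. tn (f i)) = 1 \<or> (\<Prod>i\<in>I. tn (f i)) = -1"
  using abs_prod_tn[of f I] by (auto simp: abs_if split: if_splits)

lemma pair_lemma:
  "finite I \<Longrightarrow> (\<forall>z. (\<Prod>i\<in>I. tn (y i + z)) = (\<Prod>i\<in>I. tn (y i))) \<Longrightarrow> (\<Prod>i\<in>I. tn (y i)) = 1"
proof (induction "card I" arbitrary: I rule: less_induct)
  case less
  show ?case
  proof (cases "\<exists>i\<in>I. \<exists>j\<in>I. i \<noteq> j \<and> y i = y j")
    case True
    then obtain i j where ij: "i \<in> I" "j \<in> I" "i \<noteq> j" "y i = y j" by blast
    define I' where "I' = I - {i} - {j}"
    have fin: "finite I'" using less.prems by (simp add: I'_def)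
    have eq: "(\<Prod>k\<in>I. tn (y k + z)) = (\<Prod>k\<in>I'. tn (y k + z))" for z
    proof -
      have "(\<Prod>k\<in>I. tn (y k + z)) = tn (y i + z) * (\<Prod>k\<in>I - {i}. tn (y k + z))"
        using less.prems(1) ij by (simp add: prod.remove)
      also have "(\<Prod>k\<in>I - {i}. tn (y k + z)) = tn (y j + z) * (\<Prod>k\<in>I'. tn (y k + z))"
        using less.prems(1) ij unfolding I'_def by (intro prod.remove) auto
      finally show ?thesis using ij by (simp add: mult.assoc[symmetric])
    qed
    have c: "card I' < card I" using less.prems(1) ij unfolding I'_def
      by (metis Diff_iff card_Diff1_less card_Diff_singleton_if finite_Diff less_trans singletonD)
    have "(\<Prod>k\<in>I'. tn (y k)) = 1"
      using less.hyps[OF c fin] less.prems(2) eq[of 0] eq by simp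
    then show ?thesis using eq[of 0] by simp
  next
    case False
    then have inj: "inj_on y I" by (auto simp: inj_on_def)
    show ?thesis
    proof (cases "I = {}")
      case True then show ?thesis by simp
    next
      case ne: False
      define M where "M = Max (y ` I)"
      have fin: "finite I" using less.prems by simp
      have M_in: "M \<in> y ` I" unfolding M_def using fin ne by simp
      then obtain i0 where i0: "i0 \<in> I" "y i0 = M" by auto
      have le: "y i \<le> M" if "i \<in> I" for i unfolding M_def using fin that by simp
      have lt: "y i < M" if "i \<in> I" "i \<noteq> i0" for i
        using le[OF that(1)] inj that i0 by (metis inj_onD order_le_neq_trans)
      define p where "p = M"
      have Mp: "M < 2^p" unfolding p_def by simp
      have P0: "(\<Prod>i\<in>I. tn (y i)) \<noteq> 0" using abs_prod_tn[of y I] by auto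
      show ?thesis
      proof (cases "even (card I)")
        case False
        have "(\<Prod>i\<in>I. tn (y i + 2^p)) = (\<Prod>i\<in>I. (-1) * tn (y i))"
          using le Mp by (intro prod.cong refl) (metis le_less_trans mult_minus1 tn_add_pow2)
        also have "\<dots> = (-1)^card I * (\<Prod>i\<in>I. tn (y i))"
          by (simp add: prod_uminus)
        also have "\<dots> = - (\<Prod>i\<in>I. tn (y i))" using False by simp
        finally show ?thesis using less.prems(2) P0 by (metis add.inverse_neutral equal_neg_zero)
      next
        case True
        define z where "z = 2^p - M"
        have A: "(\<Prod>i\<in>I. tn (y i + (z + 2^p))) = tn (y i0 + (z + 2^p)) * (\<Prod>i\<in>I-{i0}. tn (y i + (z + 2^p)))"
          using fin i0 by (simp add: prod.remove)
        have B: "(\<Prod>i\<in>I. tn (y i + z)) = tn (y i0 + z) * (\<Prod>i\<in>I-{i0}. tn (y i + z))"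
          using fin i0 by (simp add: prod.remove)
        have C: "(\<Prod>i\<in>I-{i0}. tn (y i + (z + 2^p))) = (\<Prod>i\<in>I-{i0}. (-1) * tn (y i + z))"
        proof (intro prod.cong refl)
          fix i assume "i \<in> I - {i0}"
          then have "y i + z < 2^p" using lt[of i] Mp unfolding z_def by auto
          then show "tn (y i + (z + 2^p)) = (-1) * tn (y i + z)"
            using tn_add_pow2[of "y i + z" p] by (simp add: add.assoc)
        qed
        have D: "(\<Prod>i\<in>I-{i0}. (-1) * tn (y i + z)) = - (\<Prod>i\<in>I-{i0}. tn (y i + z))"
        proof -
          have "card (I - {i0}) = card I - 1" using fin i0 by simp
          moreover have "card I \<ge> 1" using fin ne by (simp add: Suc_leI card_gt_0_iff)
          ultimately have "odd (card (I - {i0}))" using True by auto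
          then show ?thesis by (simp add: prod_uminus)
        qed
        have E: "y i0 + z = 2^p" using i0 Mp unfolding z_def by simp
        have F: "tn (y i0 + (z + 2^p)) = tn (y i0 + z)"
        proof -
          have "y i0 + (z + 2^p) = 2^Suc p" using E by simp
          then show ?thesis using E by (simp only: tn_pow2)
        qed
        have "(\<Prod>i\<in>I. tn (y i + (z + 2^p))) = - (\<Prod>i\<in>I. tn (y i + z))"
          using A B C D F by simp
        moreover have "(\<Prod>i\<in>I. tn (y i + (z + 2^p))) = (\<Prod>i\<in>I. tn (y i))"
          using less.prems(2) by blast
        moreover have "(\<Prod>i\<in>I. tn (y i + z)) = (\<Prod>i\<in>I. tn (y i))"
          using less.prems(2) by blast
        ultimately show ?thesis using P0 by simp
      qed
    qed
  qed
qed



lemma Pow_Suc_split: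
  "Pow {0..<Suc s} = Pow {0..<s} \<union> insert s ` Pow {0..<s}"
  by (simp add: atLeast0_lessThan_Suc Pow_insert)

lemma prod_Pow_Suc:
  "(\<Prod>w\<in>Pow {0..<Suc s}. g w) = (\<Prod>w\<in>Pow {0..<s}. g w) * (\<Prod>w\<in>Pow {0..<s}. g (insert s w))"
proof -
  have inj: "inj_on (insert s) (Pow {0..<s})"
    by (rule inj_onI) (metis PowD atLeastLessThan_iff insert_ident less_irrefl subsetD)
  have disj: "Pow {0..<s} \<inter> insert s ` Pow {0..<s} = {}" by auto
  have "(\<Prod>w\<in>Pow {0..<Suc s}. g w) = (\<Prod>w\<in>Pow {0..<s}. g w) * (\<Prod>w\<in>insert s ` Pow {0..<s}. g w)"
    unfolding Pow_Suc_split by (rule prod.union_disjoint) (use disj in auto)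
  also have "(\<Prod>w\<in>insert s ` Pow {0..<s}. g w) = (\<Prod>w\<in>Pow {0..<s}. g (insert s w))"
    using prod.reindex[OF inj] by simp
  finally show ?thesis .
qed

lemma witness_Suc: "\<exists>m::nat\<Rightarrow>nat. (\<Prod>w\<in>Pow {0..<Suc s}. tn (\<Sum>i\<in>w. m i)) = -1"
proof (induction s)
  case 0
  have "Pow {0..<Suc 0} = {{}, {0}}" by (auto simp: Pow_def)
  then show ?case by (intro exI[of _ "\<lambda>_. 1"]) simp
next
  case (Suc s)
  then obtain m :: "nat \<Rightarrow> nat" where m: "(\<Prod>w\<in>Pow {0..<Suc s}. tn (\<Sum>i\<in>w. m i)) = -1" by blast
  have "\<exists>z. (\<Prod>w\<in>Pow {0..<Suc s}. tn ((\<Sum>i\<in>w. m i) + z)) \<noteq> (\<Prod>w\<in>Pow {0..<Suc s}. tn (\<Sum>i\<in>w. m i))"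
    using pair_lemma[of "Pow {0..<Suc s}" "\<lambda>w. \<Sum>i\<in>w. m i"] m by force
  then obtain z where z: "(\<Prod>w\<in>Pow {0..<Suc s}. tn ((\<Sum>i\<in>w. m i) + z)) = 1"
    using m prod_tn_cases[of "\<lambda>w. (\<Sum>i\<in>w. m i) + z" for z] by metis
  define m' where "m' = m(Suc s := z)"
  have s1: "(\<Sum>i\<in>w. m' i) = (\<Sum>i\<in>w. m i)" if "w \<in> Pow {0..<Suc s}" for w
    using that unfolding m'_def by (intro sum.cong) auto
  have s2: "(\<Sum>i\<in>insert (Suc s) w. m' i) = (\<Sum>i\<in>w. m i) + z" if "w \<in> Pow {0..<Suc s}" for w
  proof -
    have fin: "finite w" using that finite_subset by auto
    have "Suc s \<notin> w" using that by auto
    then have "(\<Sum>i\<in>insert (Suc s) w. m' i) = m' (Suc s) + (\<Sum>i\<in>w. m' i)" using fin by simp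
    then show ?thesis using s1[OF that] unfolding m'_def by simp
  qed
  have "(\<Prod>w\<in>Pow {0..<Suc (Suc s)}. tn (\<Sum>i\<in>w. m' i))
     = (\<Prod>w\<in>Pow {0..<Suc s}. tn (\<Sum>i\<in>w. m' i)) * (\<Prod>w\<in>Pow {0..<Suc s}. tn (\<Sum>i\<in>insert (Suc s) w. m' i))"
    by (rule prod_Pow_Suc)
  also have "\<dots> = (\<Prod>w\<in>Pow {0..<Suc s}. tn (\<Sum>i\<in>w. m i)) * (\<Prod>w\<in>Pow {0..<Suc s}. tn ((\<Sum>i\<in>w. m i) + z))"
    using s1 s2 by (intro arg_cong2[where f="(*)"] prod.cong refl) auto
  also have "\<dots> = -1" using m z by simp
  finally show ?case by blast
qed

lemma witness: "s \<ge> 1 \<Longrightarrow> \<exists>m::nat\<Rightarrow>nat. (\<Prod>w\<in>Pow {0..<s}. thue_morse (\<Sum>i\<in>w. int (m i))) = -1"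
  using witness_Suc[of "s - 1"] by (simp add: tm_int flip: of_nat_sum)



definition cfg :: "nat \<Rightarrow> nat \<Rightarrow> (nat set \<Rightarrow> int) \<Rightarrow> (int \<times> (nat \<Rightarrow> int)) set" where
  "cfg s M r = {(n, h). h \<in> {0..<s} \<rightarrow>\<^sub>E (UNIV :: int set) \<and>
      (\<forall>w \<in> Pow {0..<s}. n + (\<Sum>i\<in>w. h i) + r w \<in> {0..<2 ^ M})}"

definition T :: "nat \<Rightarrow> nat \<Rightarrow> (nat set \<Rightarrow> int) \<Rightarrow> real" where
  "T s M r = (\<Sum>(n, h)\<in>cfg s M r. \<Prod>w\<in>Pow {0..<s}. thue_morse (n + (\<Sum>i\<in>w. h i) + r w))"

lemma cube_cfg: "cube_configs s L = cfg s L (\<lambda>_. 0)"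
  by (simp add: cube_configs_def cfg_def)

lemma gowers_T: "gowers_A s L = T s L (\<lambda>_. 0) / real (card (cfg s L (\<lambda>_. 0)))"
  by (simp add: gowers_A_def T_def cube_cfg)

lemma cfg_finite: "finite (cfg s M r)"
proof -
  define K :: int where "K = 2^M + (\<Sum>w\<in>Pow {0..<s}. \<bar>r w\<bar>)"
  have rle: "\<bar>r w\<bar> \<le> (\<Sum>w\<in>Pow {0..<s}. \<bar>r w\<bar>)" if "w \<in> Pow {0..<s}" for w
    using that by (intro member_le_sum) auto
  have "cfg s M r \<subseteq> {-K..K} \<times> ({0..<s} \<rightarrow>\<^sub>E {-3*K..3*K})"
  proof
    fix x assume x: "x \<in> cfg s M r"
    obtain n h where nh: "x = (n, h)" by force
    have h: "h \<in> {0..<s} \<rightarrow>\<^sub>E (UNIV :: int set)" and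
      rng: "\<And>w. w \<in> Pow {0..<s} \<Longrightarrow> n + (\<Sum>i\<in>w. h i) + r w \<in> {0..<2 ^ M}"
      using x nh by (auto simp: cfg_def)
    have r0: "\<bar>r {}\<bar> \<le> K - 2^M" using rle[of "{}"] unfolding K_def by auto
    have n: "\<bar>n\<bar> \<le> K" using rng[of "{}"] r0 by auto
    have "h i \<in> {-3*K..3*K}" if "i \<in> {0..<s}" for i
    proof -
      have ri: "\<bar>r {i}\<bar> \<le> K - 2^M" using rle[of "{i}"] that unfolding K_def by auto
      have "n + h i + r {i} \<in> {0..<2^M}" using rng[of "{i}"] that by simp
      moreover have "(0::int) \<le> 2^M" by simp
      ultimately show ?thesis using n ri by auto
    qed
    then show "x \<in> {-K..K} \<times> ({0..<s} \<rightarrow>\<^sub>E {-3*K..3*K})"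
      using h n nh by (auto simp: PiE_def Pi_def)
  qed
  moreover have "finite ({-K..K} \<times> ({0..<s} \<rightarrow>\<^sub>E {-3*K..3*K}))"
    by (intro finite_cartesian_product finite_PiE) auto
  ultimately show ?thesis by (rule finite_subset)
qed

lemma tm_split_int:
  assumes "0 \<le> x" "0 \<le> b" "b < 2^j"
  shows "thue_morse (2^j * x + b) = thue_morse x * thue_morse b"
proof -
  obtain x' b' where xb: "x = int x'" "b = int b'" using assms by (metis nonneg_eq_int)
  have "b' < 2^j" using assms xb by (metis of_nat_less_iff of_nat_numeral of_nat_power)
  have "2^j * x + b = int (2^j * x' + b')" using xb by simp
  then show ?thesis using tn_split[OF \<open>b' < 2^j\<close>] xb by (simp only: tm_int)
qed

lemma sum_restrict: "w \<subseteq> A \<Longrightarrow> (\<Sum>i\<in>w. restrict f A i) = (\<Sum>i\<in>w. f i)"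
  by (intro sum.cong) auto

definition Idx :: "nat \<Rightarrow> int \<Rightarrow> (int \<times> (nat \<Rightarrow> int)) set" where
  "Idx s B = {0..<B} \<times> ({0..<s} \<rightarrow>\<^sub>E {0..<B})"

definition sig :: "nat \<Rightarrow> int \<Rightarrow> (nat set \<Rightarrow> int) \<Rightarrow> int \<Rightarrow> (nat \<Rightarrow> int) \<Rightarrow> real" where
  "sig s B r c d = (\<Prod>w\<in>Pow {0..<s}. thue_morse ((c + (\<Sum>i\<in>w. d i) + r w) mod B))"

definition nr :: "int \<Rightarrow> (nat set \<Rightarrow> int) \<Rightarrow> int \<Rightarrow> (nat \<Rightarrow> int) \<Rightarrow> nat set \<Rightarrow> int" where
  "nr B r c d = (\<lambda>w. (c + (\<Sum>i\<in>w. d i) + r w) div B)"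

lemma Idx_finite: "finite (Idx s B)"
  unfolding Idx_def by (intro finite_cartesian_product finite_PiE) auto

lemma card_Idx: "B \<ge> 0 \<Longrightarrow> card (Idx s B) = nat B ^ Suc s"
  unfolding Idx_def by (simp add: card_cartesian_product card_PiE)



lemma decomp:
  fixes B :: int
  assumes "B > 0"
  shows "B * x + y = B * (x + y div B) + y mod B"
  by (simp add: algebra_simps)

lemma range_div:
  fixes B :: int
  assumes B: "B > 0" and b: "0 \<le> b" "b < B"
  shows "(B * X + b \<in> {0..<B * 2^M}) = (X \<in> {0..<2^M})"
proof
  assume "B * X + b \<in> {0..<B * 2^M}"
  then have "B * X + b \<ge> 0" "B * X + b < B * 2^M" by auto
  then have "B * X > - B" "B * X < B * 2^M" using b by linarith+
  then have "X > -1" "X < 2^M" using B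
    by (metis mult_less_cancel_left_pos mult_minus1_right mult.commute)+
  then show "X \<in> {0..<2^M}" by auto
next
  assume "X \<in> {0..<2^M}"
  then have "0 \<le> X" "X + 1 \<le> 2^M" by auto
  then have "B * X \<ge> 0" "B * (X + 1) \<le> B * 2^M" using B by (auto intro: mult_left_mono)
  then show "B * X + b \<in> {0..<B * 2^M}" using b by (auto simp: algebra_simps)
qed

lemma range_div1:
  fixes B :: int
  assumes "B > 0" "Z = B * X + y mod B" "Z \<in> {0..<2^(M+j)}" "(2::int)^(M+j) = B * 2^M"
  shows "X \<in> {0..<2^M}"
  using range_div[of B "y mod B" X M] assms by auto

lemma range_div2:
  fixes B :: int
  assumes "B > 0" "Z = B * X + y mod B" "X \<in> {0..<2^M}" "(2::int)^(M+j) = B * 2^M"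
  shows "Z \<in> {0..<2^(M+j)}"
  using range_div[of B "y mod B" X M] assms by auto

lemma T_rec:
  fixes B :: int
  assumes B: "B = 2^j"
  shows "T s (M + j) r = (\<Sum>(c, d)\<in>Idx s B. sig s B r c d * T s M (nr B r c d))"
proof -
  have Bp: "B > 0" using B by simp
  have BM: "(2::int)^(M+j) = B * 2^M" using B by (simp add: power_add)
  define S where "S = Sigma (Idx s B) (\<lambda>a. cfg s M (nr B r (fst a) (snd a)))"
  define G where "G = (\<lambda>(a::int \<times> (nat \<Rightarrow> int)) (b::int \<times> (nat \<Rightarrow> int)).
     sig s B r (fst a) (snd a) * (\<Prod>w\<in>Pow {0..<s}. thue_morse (fst b + (\<Sum>i\<in>w. snd b i) + nr B r (fst a) (snd a) w)))"
  define g where "g = (\<lambda>(a, b). G a b)"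
  have rhs0: "(\<Sum>(c, d)\<in>Idx s B. sig s B r c d * T s M (nr B r c d)) =
      (\<Sum>a\<in>Idx s B. \<Sum>b\<in>cfg s M (nr B r (fst a) (snd a)). G a b)"
    unfolding T_def G_def
    by (auto simp: sum_distrib_left case_prod_beta intro!: sum.cong)
  have rhs: "(\<Sum>(c, d)\<in>Idx s B. sig s B r c d * T s M (nr B r c d)) = sum g S"
    unfolding rhs0 S_def g_def by (rule sum.Sigma) (auto simp: Idx_finite cfg_finite)
  define F where "F = (\<lambda>(n::int, h::nat \<Rightarrow> int). \<Prod>w\<in>Pow {0..<s}. thue_morse (n + (\<Sum>i\<in>w. h i) + r w))"
  have lhs: "T s (M + j) r = sum F (cfg s (M + j) r)" unfolding T_def F_def by simp
  define jj where "jj = (\<lambda>(n::int, h::nat \<Rightarrow> int). ((n mod B, restrict (\<lambda>i. h i mod B) {0..<s}),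
                                 (n div B, restrict (\<lambda>i. h i div B) {0..<s})))"
  define ii where "ii = (\<lambda>((c::int, d::nat \<Rightarrow> int), (n::int, h::nat \<Rightarrow> int)).
                        (B * n + c, restrict (\<lambda>i. B * h i + d i) {0..<s}))"
  have key: "n + (\<Sum>i\<in>w. h i) + r w =
      B * (n div B + (\<Sum>i\<in>w. h i div B) + (n mod B + (\<Sum>i\<in>w. h i mod B) + r w) div B)
      + (n mod B + (\<Sum>i\<in>w. h i mod B) + r w) mod B" for n h w
  proof -
    have "n + (\<Sum>i\<in>w. h i) + r w = B * (n div B + (\<Sum>i\<in>w. h i div B)) + (n mod B + (\<Sum>i\<in>w. h i mod B) + r w)"
    proof -
      have "(\<Sum>i\<in>w. h i) = (\<Sum>i\<in>w. B * (h i div B) + h i mod B)"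
        by (simp only: mult_div_mod_eq)
      also have "\<dots> = B * (\<Sum>i\<in>w. h i div B) + (\<Sum>i\<in>w. h i mod B)"
        by (simp only: sum.distrib sum_distrib_left)
      finally show ?thesis by (simp add: algebra_simps)
    qed
    then show ?thesis using decomp[OF Bp] by simp
  qed
  have key2: "B * n + c + (\<Sum>i\<in>w. B * h i + d i) + r w =
      B * (n + (\<Sum>i\<in>w. h i) + (c + (\<Sum>i\<in>w. d i) + r w) div B) + (c + (\<Sum>i\<in>w. d i) + r w) mod B"
    for n c h d w
  proof -
    have "B * n + c + (\<Sum>i\<in>w. B * h i + d i) + r w = B * (n + (\<Sum>i\<in>w. h i)) + (c + (\<Sum>i\<in>w. d i) + r w)"
      by (simp add: sum.distrib sum_distrib_left algebra_simps)
    then show ?thesis using decomp[OF Bp] by simp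
  qed
  have modB: "0 \<le> y mod B" "y mod B < B" for y using Bp by auto
  have "sum F (cfg s (M + j) r) = sum g S"
  proof (rule sum.reindex_bij_witness[where i = ii and j = jj])
    fix a assume a: "a \<in> cfg s (M + j) r"
    obtain n h where nh: "a = (n, h)" by force
    have h: "h \<in> {0..<s} \<rightarrow>\<^sub>E UNIV" and
      rng: "\<And>w. w \<in> Pow {0..<s} \<Longrightarrow> n + (\<Sum>i\<in>w. h i) + r w \<in> {0..<2 ^ (M + j)}"
      using a nh by (auto simp: cfg_def)
    show "ii (jj a) = a"
      unfolding nh ii_def jj_def using h
      by (auto simp: PiE_def extensional_def fun_eq_iff)
    show "jj a \<in> S"
    proof -
      have "(n mod B, restrict (\<lambda>i. h i mod B) {0..<s}) \<in> Idx s B"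
        unfolding Idx_def using modB by auto
      moreover have "(n div B, restrict (\<lambda>i. h i div B) {0..<s}) \<in>
          cfg s M (nr B r (n mod B) (restrict (\<lambda>i. h i mod B) {0..<s}))"
      proof -
        have "n div B + (\<Sum>i\<in>w. h i div B) + (n mod B + (\<Sum>i\<in>w. h i mod B) + r w) div B \<in> {0..<2^M}"
          if "w \<in> Pow {0..<s}" for w
          by (rule range_div1[OF Bp key[of n h w] rng[OF that] BM])
        note A = this
        have "\<forall>w\<in>Pow {0..<s}. n div B + (\<Sum>i\<in>w. restrict (\<lambda>i. h i div B) {0..<s} i) +
            nr B r (n mod B) (restrict (\<lambda>i. h i mod B) {0..<s}) w \<in> {0..<2^M}"
        proof
          fix w assume w: "w \<in> Pow {0..<s}"
          have e1: "(\<Sum>i\<in>w. restrict (\<lambda>i. h i mod B) {0..<s} i) = (\<Sum>i\<in>w. h i mod B)"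
            using w by (intro sum_restrict) auto
          have e2: "(\<Sum>i\<in>w. restrict (\<lambda>i. h i div B) {0..<s} i) = (\<Sum>i\<in>w. h i div B)"
            using w by (intro sum_restrict) auto
          show "n div B + (\<Sum>i\<in>w. restrict (\<lambda>i. h i div B) {0..<s} i) +
            nr B r (n mod B) (restrict (\<lambda>i. h i mod B) {0..<s}) w \<in> {0..<2^M}"
            unfolding nr_def e1 e2 using A[OF w] .
        qed
        then show ?thesis unfolding cfg_def by auto
      qed
      ultimately show ?thesis unfolding S_def jj_def nh by auto
    qed
    show "g (jj a) = F a"
    proof -
      have "thue_morse ((n mod B + (\<Sum>i\<in>w. restrict (\<lambda>i. h i mod B) {0..<s} i) + r w) mod B) *
            thue_morse (n div B + (\<Sum>i\<in>w. restrict (\<lambda>i. h i div B) {0..<s} i) +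
               nr B r (n mod B) (restrict (\<lambda>i. h i mod B) {0..<s}) w)
          = thue_morse (n + (\<Sum>i\<in>w. h i) + r w)" if w: "w \<in> Pow {0..<s}" for w
      proof -
        define X where "X = n div B + (\<Sum>i\<in>w. h i div B) + (n mod B + (\<Sum>i\<in>w. h i mod B) + r w) div B"
        define b where "b = (n mod B + (\<Sum>i\<in>w. h i mod B) + r w) mod B"
        have e: "n + (\<Sum>i\<in>w. h i) + r w = B * X + b" unfolding X_def b_def by (rule key)
        have X: "X \<in> {0..<2^M}" using range_div1[OF Bp e[unfolded b_def] rng[OF w] BM] .
        have "thue_morse (B * X + b) = thue_morse X * thue_morse b"
          using tm_split_int[of X b j] X modB B unfolding b_def by auto
        moreover have "(\<Sum>i\<in>w. restrict (\<lambda>i. h i mod B) {0..<s} i) = (\<Sum>i\<in>w. h i mod B)"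
          "(\<Sum>i\<in>w. restrict (\<lambda>i. h i div B) {0..<s} i) = (\<Sum>i\<in>w. h i div B)"
          using w by (intro sum_restrict; auto)+
        ultimately show ?thesis using e unfolding X_def b_def nr_def by (simp add: mult.commute)
      qed
      then show ?thesis unfolding g_def G_def F_def jj_def nh sig_def
        by (simp add: prod.distrib[symmetric])
    qed
  next
    fix b assume b: "b \<in> S"
    obtain c d n h where cdnh: "b = ((c, d), (n, h))" by (metis prod.exhaust)
    have cd: "0 \<le> c" "c < B" "d \<in> {0..<s} \<rightarrow>\<^sub>E {0..<B}" and
      nh: "h \<in> {0..<s} \<rightarrow>\<^sub>E UNIV" and
      rng: "\<And>w. w \<in> Pow {0..<s} \<Longrightarrow> n + (\<Sum>i\<in>w. h i) + nr B r c d w \<in> {0..<2 ^ M}"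
      using b cdnh unfolding S_def Idx_def cfg_def by auto
    have dmod: "d i mod B = d i" "d i div B = 0" if "i < s" for i
      using cd(3) that by (auto simp: PiE_def Pi_def)
    show "jj (ii b) = b"
      unfolding cdnh ii_def jj_def using cd nh dmod
      by (auto simp: PiE_def extensional_def fun_eq_iff)
    show "ii b \<in> cfg s (M + j) r"
    proof -
      have "B * n + c + (\<Sum>i\<in>w. B * h i + d i) + r w \<in> {0..<2^(M+j)}" if "w \<in> Pow {0..<s}" for w
        using range_div2[OF Bp key2[of n c h d w] _ BM] rng[OF that] unfolding nr_def by simp
      note A = this
      have "\<forall>w\<in>Pow {0..<s}. B * n + c + (\<Sum>i\<in>w. restrict (\<lambda>i. B * h i + d i) {0..<s} i) + r w \<in> {0..<2^(M+j)}"
      proof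
        fix w assume w: "w \<in> Pow {0..<s}"
        have e: "(\<Sum>i\<in>w. restrict (\<lambda>i. B * h i + d i) {0..<s} i) = (\<Sum>i\<in>w. B * h i + d i)"
          using w by (intro sum_restrict) auto
        show "B * n + c + (\<Sum>i\<in>w. restrict (\<lambda>i. B * h i + d i) {0..<s} i) + r w \<in> {0..<2^(M+j)}"
          unfolding e using A[OF w] .
      qed
      moreover have "restrict (\<lambda>i. B * h i + d i) {0..<s} \<in> {0..<s} \<rightarrow>\<^sub>E UNIV" by simp
      ultimately show ?thesis unfolding ii_def cdnh cfg_def by simp
    qed
  qed
  then show ?thesis using lhs rhs by simp
qed



lemma T_congr: "(\<And>w. w \<in> Pow {0..<s} \<Longrightarrow> r w = r' w) \<Longrightarrow> T s M r = T s M r'"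
proof -
  assume eq: "\<And>w. w \<in> Pow {0..<s} \<Longrightarrow> r w = r' w"
  have c: "cfg s M r = cfg s M r'" unfolding cfg_def using eq by auto
  show ?thesis unfolding T_def c
    by (intro sum.cong refl) (auto intro!: prod.cong simp: eq)
qed

lemma abs_prod_tm: "\<bar>\<Prod>w\<in>A. thue_morse (f w)\<bar> = 1"
  by (simp add: abs_prod)

lemma T_card: "\<bar>T s M r\<bar> \<le> real (card (cfg s M r))"
proof -
  have "\<bar>T s M r\<bar> \<le> (\<Sum>x\<in>cfg s M r. \<bar>case x of (n, h) \<Rightarrow> \<Prod>w\<in>Pow {0..<s}. thue_morse (n + (\<Sum>i\<in>w. h i) + r w)\<bar>)"
    unfolding T_def by (rule sum_abs)
  also have "\<dots> = real (card (cfg s M r))"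
    by (simp add: case_prod_beta abs_prod)
  finally show ?thesis .
qed

lemma T_zero: "\<bar>T s 0 r\<bar> \<le> 1"
proof -
  have "card (cfg s 0 r) \<le> Suc 0"
  proof (subst card_le_Suc0_iff_eq[OF cfg_finite], intro ballI)
    fix a b assume a: "a \<in> cfg s 0 r" and b: "b \<in> cfg s 0 r"
    obtain n h where a': "a = (n, h)" by force
    obtain n' h' where b': "b = (n', h')" by force
    have h: "h \<in> {0..<s} \<rightarrow>\<^sub>E UNIV" "\<And>w. w \<in> Pow {0..<s} \<Longrightarrow> n + (\<Sum>i\<in>w. h i) + r w = 0"
      using a a' by (auto simp: cfg_def) (smt (verit, best) PowI)
    have h': "h' \<in> {0..<s} \<rightarrow>\<^sub>E UNIV" "\<And>w. w \<in> Pow {0..<s} \<Longrightarrow> n' + (\<Sum>i\<in>w. h' i) + r w = 0"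
      using b b' by (auto simp: cfg_def) (smt (verit, best) PowI)
    have nn: "n = n'" using h(2)[of "{}"] h'(2)[of "{}"] by simp
    have "h i = h' i" for i
    proof (cases "i < s")
      case True
      then show ?thesis using h(2)[of "{i}"] h'(2)[of "{i}"] nn by simp
    next
      case False
      then show ?thesis using h(1) h'(1) by (auto simp: PiE_def extensional_def)
    qed
    then show "a = b" using a' b' nn by auto
  qed
  then show ?thesis using T_card[of s 0 r] by simp
qed

lemma abs_sig: "\<bar>sig s B r c d\<bar> = 1"
  by (simp add: sig_def abs_prod)

lemma T_triv: "\<bar>T s M r\<bar> \<le> 2 ^ (Suc s * M)"
proof (induction M arbitrary: r)
  case 0
  then show ?case using T_zero by simp
next
  case (Suc M)
  have "T s (M + 1) r = (\<Sum>(c, d)\<in>Idx s 2. sig s 2 r c d * T s M (nr 2 r c d))"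
    by (rule T_rec) simp
  then have "\<bar>T s (Suc M) r\<bar> \<le> (\<Sum>x\<in>Idx s 2. \<bar>case x of (c, d) \<Rightarrow> sig s 2 r c d * T s M (nr 2 r c d)\<bar>)"
    by (simp add: sum_abs)
  also have "\<dots> \<le> (\<Sum>x\<in>Idx s 2. 2 ^ (Suc s * M))"
    using Suc.IH by (intro sum_mono) (auto simp: case_prod_beta abs_mult abs_sig)
  also have "\<dots> = 2 ^ Suc s * 2 ^ (Suc s * M)" by (simp add: card_Idx)
  also have "\<dots> = 2 ^ (Suc s * Suc M)" by (simp add: power_add[symmetric])
  finally show ?case .
qed



definition Sset :: "nat \<Rightarrow> (nat set \<Rightarrow> int) set" where
  "Sset s = {r. \<forall>w\<in>Pow {0..<s}. 0 \<le> r w \<and> r w \<le> int s + 1}"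

lemma nr_Sset:
  fixes B :: int
  assumes B: "B > 0" and r: "r \<in> Sset s" and cd: "(c, d) \<in> Idx s B"
  shows "nr B r c d \<in> Sset s"
  unfolding Sset_def
proof (intro CollectI ballI conjI)
  fix w assume w: "w \<in> Pow {0..<s}"
  have c: "0 \<le> c" "c \<le> B - 1" and d: "\<And>i. i \<in> {0..<s} \<Longrightarrow> 0 \<le> d i \<and> d i \<le> B - 1"
    using cd unfolding Idx_def by (auto simp: PiE_def Pi_def)
  have rw: "0 \<le> r w" "r w \<le> int s + 1" using r w unfolding Sset_def by auto
  have fw: "finite w" using w finite_subset by auto
  have cw: "card w \<le> s" using w card_mono[of "{0..<s}" w] by auto
  have s0: "0 \<le> (\<Sum>i\<in>w. d i)" using d w by (intro sum_nonneg) auto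
  have "(\<Sum>i\<in>w. d i) \<le> of_nat (card w) * (B - 1)"
    using d w by (intro sum_bounded_above) auto
  also have "\<dots> \<le> int s * (B - 1)" using cw B by (intro mult_right_mono) auto
  finally have s1: "(\<Sum>i\<in>w. d i) \<le> int s * (B - 1)" .
  have "0 \<le> c + (\<Sum>i\<in>w. d i) + r w" using c s0 rw by simp
  then show "0 \<le> nr B r c d w" unfolding nr_def using B by (simp add: pos_imp_zdiv_nonneg_iff)
  have "c + (\<Sum>i\<in>w. d i) + r w \<le> (int s + 1) * B"
    using c s1 rw by (simp add: algebra_simps)
  then have "(c + (\<Sum>i\<in>w. d i) + r w) div B \<le> ((int s + 1) * B) div B"
    using B by (intro zdiv_mono1) auto
  then show "nr B r c d w \<le> int s + 1" unfolding nr_def using B by simp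
qed

lemma zero_Sset: "(\<lambda>_. 0) \<in> Sset s" by (simp add: Sset_def)

lemma contr:
  fixes B :: int and m :: "nat \<Rightarrow> nat"
  assumes Q: "(\<Prod>w\<in>Pow {0..<s}. thue_morse (\<Sum>i\<in>w. int (m i))) = -1"
    and p: "int s + 1 < 2^p"
    and q: "(\<Sum>i<s. m i) < 2^q"
    and B: "B = 2^(p+q)"
    and r: "r \<in> Sset s"
    and X: "\<And>r'. r' \<in> Sset s \<Longrightarrow> \<bar>T s M r'\<bar> \<le> X"
  shows "\<bar>T s (M + (p+q)) r\<bar> \<le> (real (card (Idx s B)) - 2) * X"
proof -
  have Bp: "B > 0" using B by simp
  define P :: int where "P = 2^p"
  define Q' :: int where "Q' = 2^q"
  have BPQ: "B = P * Q'" unfolding B P_def Q'_def by (simp add: power_add)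
  define f where "f = (\<lambda>(c, d). sig s B r c d * T s M (nr B r c d))"
  have rec: "T s (M + (p+q)) r = sum f (Idx s B)" unfolding f_def by (rule T_rec[OF B])
  define d1 :: "nat \<Rightarrow> int" where "d1 = restrict (\<lambda>_. 0) {0..<s}"
  define d2 :: "nat \<Rightarrow> int" where "d2 = restrict (\<lambda>i. P * int (m i)) {0..<s}"
  have rw: "0 \<le> r w" "r w < P" if "w \<in> Pow {0..<s}" for w
  proof -
    have "0 \<le> r w \<and> r w \<le> int s + 1" using r that unfolding Sset_def by blast
    then show "0 \<le> r w" "r w < P" using p unfolding P_def by auto
  qed
  have msum: "(\<Sum>i\<in>w. int (m i)) \<le> int (\<Sum>i<s. m i)" if "w \<in> Pow {0..<s}" for w
  proof -
    have "(\<Sum>i\<in>w. m i) \<le> (\<Sum>i<s. m i)" using that by (intro sum_mono2) auto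
    then show ?thesis by (simp flip: of_nat_sum)
  qed
  have msum0: "0 \<le> (\<Sum>i\<in>w. int (m i))" for w by (simp add: sum_nonneg)
  have mQ: "int (\<Sum>i<s. m i) + 1 \<le> Q'" using q unfolding Q'_def
    by (metis add1_zle_eq of_nat_less_iff of_nat_numeral of_nat_power)
  have P0: "P > 0" unfolding P_def by simp
  have small: "P * (\<Sum>i\<in>w. int (m i)) + r w < B" if "w \<in> Pow {0..<s}" for w
  proof -
    have "P * (\<Sum>i\<in>w. int (m i)) + r w < P * (\<Sum>i\<in>w. int (m i)) + P" using rw[OF that] by simp
    also have "\<dots> = P * ((\<Sum>i\<in>w. int (m i)) + 1)" by (simp add: algebra_simps)
    also have "\<dots> \<le> P * Q'" using msum[OF that] mQ P0 by (intro mult_left_mono) auto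
    finally show ?thesis using BPQ by simp
  qed
  have sum_d1: "(\<Sum>i\<in>w. d1 i) = 0" if "w \<in> Pow {0..<s}" for w
    using that unfolding d1_def by (subst sum_restrict) auto
  have sum_d2: "(\<Sum>i\<in>w. d2 i) = P * (\<Sum>i\<in>w. int (m i))" if "w \<in> Pow {0..<s}" for w
    using that unfolding d2_def by (subst sum_restrict) (auto simp: sum_distrib_left)
  have a1: "(0, d1) \<in> Idx s B" unfolding Idx_def d1_def using Bp by auto
  have a2: "(0, d2) \<in> Idx s B"
  proof -
    have "P * int (m i) < B" if "i < s" for i
    proof -
      have "m i \<le> (\<Sum>i<s. m i)" using that by (intro member_le_sum) auto
      then have mi: "int (m i) + 1 \<le> Q'" using mQ by linarith
      then have "P * (int (m i) + 1) \<le> P * Q'" using P0 by (intro mult_left_mono) auto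
      then show ?thesis using BPQ P0 mi by (simp add: algebra_simps)
    qed
    then show ?thesis unfolding Idx_def d2_def using Bp P0 by auto
  qed
  have nr1: "nr B r 0 d1 w = 0" if "w \<in> Pow {0..<s}" for w
    unfolding nr_def using sum_d1[OF that] rw[OF that] small[OF that] msum0[of w] P0
    by (auto intro!: div_pos_pos_trivial) (smt (verit) mult_nonneg_nonneg)
  have nr2: "nr B r 0 d2 w = 0" if "w \<in> Pow {0..<s}" for w
    unfolding nr_def using sum_d2[OF that] rw[OF that] small[OF that] msum0[of w] P0
    by (auto intro!: div_pos_pos_trivial)
  have Teq: "T s M (nr B r 0 d2) = T s M (nr B r 0 d1)"
    using nr1 nr2 by (intro T_congr) simp
  have sig1: "sig s B r 0 d1 = (\<Prod>w\<in>Pow {0..<s}. thue_morse (r w))"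
  proof -
    have "(r w) mod B = r w" if "w \<in> Pow {0..<s}" for w
      using rw[OF that] small[OF that] msum0[of w] P0
      by (intro mod_pos_pos_trivial) (auto, smt (verit) mult_nonneg_nonneg)
    then show ?thesis unfolding sig_def using sum_d1 by (intro prod.cong) auto
  qed
  have sig2: "sig s B r 0 d2 = - sig s B r 0 d1"
  proof -
    have "thue_morse ((0 + (\<Sum>i\<in>w. d2 i) + r w) mod B) = thue_morse (\<Sum>i\<in>w. int (m i)) * thue_morse (r w)"
      if "w \<in> Pow {0..<s}" for w
    proof -
      have "(0 + (\<Sum>i\<in>w. d2 i) + r w) mod B = P * (\<Sum>i\<in>w. int (m i)) + r w"
        using sum_d2[OF that] rw[OF that] small[OF that] msum0[of w] P0
        by (auto intro!: mod_pos_pos_trivial)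
      then show ?thesis using tm_split_int[of "\<Sum>i\<in>w. int (m i)" "r w" p] rw[OF that] msum0[of w]
        unfolding P_def by simp
    qed
    then have "sig s B r 0 d2 = (\<Prod>w\<in>Pow {0..<s}. thue_morse (\<Sum>i\<in>w. int (m i)) * thue_morse (r w))"
      unfolding sig_def by (intro prod.cong) auto
    also have "\<dots> = - (\<Prod>w\<in>Pow {0..<s}. thue_morse (r w))" using Q by (simp add: prod.distrib)
    finally show ?thesis using sig1 by simp
  qed
  have ne: "(0, d1) \<noteq> (0, d2)"
  proof
    assume "(0, d1) = (0, d2)"
    then have "sig s B r 0 d2 = sig s B r 0 d1" by simp
    then show False using sig2 abs_sig[of s B r 0 d1] by simp
  qed
  have fin: "finite (Idx s B)" by (rule Idx_finite)
  have "sum f (Idx s B) = f (0, d1) + sum f (Idx s B - {(0, d1)})"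
    using fin a1 by (simp add: sum.remove)
  also have "sum f (Idx s B - {(0, d1)}) = f (0, d2) + sum f (Idx s B - {(0, d1)} - {(0, d2)})"
    using fin a2 ne by (intro sum.remove) auto
  also have "f (0, d1) + (f (0, d2) + sum f (Idx s B - {(0, d1)} - {(0, d2)})) = sum f (Idx s B - {(0, d1)} - {(0, d2)})"
    unfolding f_def using sig2 Teq by simp
  finally have eq: "T s (M + (p+q)) r = sum f (Idx s B - {(0, d1)} - {(0, d2)})" using rec by simp
  have "\<bar>sum f (Idx s B - {(0, d1)} - {(0, d2)})\<bar> \<le> (\<Sum>x\<in>Idx s B - {(0, d1)} - {(0, d2)}. \<bar>f x\<bar>)"
    by (rule sum_abs)
  also have "\<dots> \<le> (\<Sum>x\<in>Idx s B - {(0, d1)} - {(0, d2)}. X)"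
  proof (intro sum_mono)
    fix x assume "x \<in> Idx s B - {(0, d1)} - {(0, d2)}"
    then obtain c d where x: "x = (c, d)" "(c, d) \<in> Idx s B" by (metis DiffD1 prod.exhaust)
    have "nr B r c d \<in> Sset s" by (rule nr_Sset[OF Bp r x(2)])
    then show "\<bar>f x\<bar> \<le> X" unfolding f_def x using X by (simp add: abs_mult abs_sig)
  qed
  also have "\<dots> = real (card (Idx s B - {(0, d1)} - {(0, d2)})) * X" by simp
  also have "card (Idx s B - {(0, d1)} - {(0, d2)}) = card (Idx s B) - 2"
    using fin a1 a2 ne by (simp add: card_Diff_singleton_if)
  also have "real (card (Idx s B) - 2) = real (card (Idx s B)) - 2"
  proof -
    have "{(0, d1), (0, d2)} \<subseteq> Idx s B" using a1 a2 by auto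
    then have "card {(0::int, d1), (0, d2)} \<le> card (Idx s B)" using fin by (metis card_mono)
    then have "2 \<le> card (Idx s B)" using ne by simp
    then show ?thesis by simp
  qed
  finally show ?thesis using eq by simp
qed



lemma iter:
  fixes B :: int and m :: "nat \<Rightarrow> nat"
  assumes Q: "(\<Prod>w\<in>Pow {0..<s}. thue_morse (\<Sum>i\<in>w. int (m i))) = -1"
    and p: "int s + 1 < 2^p"
    and q: "(\<Sum>i<s. m i) < 2^q"
    and B: "B = 2^(p+q)"
    and D: "D = real (card (Idx s B)) - 2" "D \<ge> 0"
  shows "r \<in> Sset s \<Longrightarrow> \<bar>T s (M + k * (p+q)) r\<bar> \<le> D^k * 2^(Suc s * M)"
proof (induction k arbitrary: r)
  case 0
  then show ?case using T_triv by simp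
next
  case (Suc k)
  have A: "\<bar>T s ((M + k * (p+q)) + (p+q)) r\<bar> \<le> (real (card (Idx s B)) - 2) * (D^k * 2^(Suc s * M))"
    by (rule contr[OF Q p q B Suc.prems Suc.IH])
  have e: "M + Suc k * (p+q) = (M + k * (p+q)) + (p+q)" by simp
  show ?case unfolding e using A D(1) by (simp only: power_Suc mult.assoc)
qed

lemma card_lower:
  fixes L s :: nat
  defines "K \<equiv> (2::int)^L div (int s + 1)"
  shows "real (nat K) ^ Suc s \<le> real (card (cfg s L (\<lambda>_. 0)))"
proof -
  have K0: "0 \<le> K" unfolding K_def by (simp add: pos_imp_zdiv_nonneg_iff)
  have KL: "(int s + 1) * K \<le> 2^L" unfolding K_def
    using mult_div_mod_eq[of "int s + 1" "2^L"] pos_mod_sign[of "int s + 1" "2^L"] by linarith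
  have sub: "{0..<K} \<times> ({0..<s} \<rightarrow>\<^sub>E {0..<K}) \<subseteq> cfg s L (\<lambda>_. 0)"
  proof
    fix x assume x: "x \<in> {0..<K} \<times> ({0..<s} \<rightarrow>\<^sub>E {0..<K})"
    obtain n h where nh: "x = (n, h)" by force
    have n: "0 \<le> n" "n \<le> K - 1" and h: "h \<in> {0..<s} \<rightarrow>\<^sub>E {0..<K}"
      using x nh by auto
    have hi: "0 \<le> h i \<and> h i \<le> K - 1" if "i \<in> {0..<s}" for i using h that by (auto simp: PiE_def Pi_def)
    have "n + (\<Sum>i\<in>w. h i) \<in> {0..<2^L}" if w: "w \<in> Pow {0..<s}" for w
    proof -
      have cw: "card w \<le> s" using w card_mono[of "{0..<s}" w] by auto
      have s0: "0 \<le> (\<Sum>i\<in>w. h i)" using hi w by (intro sum_nonneg) auto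
      have "(\<Sum>i\<in>w. h i) \<le> of_nat (card w) * (K - 1)"
        using hi w by (intro sum_bounded_above) auto
      also have "\<dots> \<le> int s * (K - 1)"
      proof (cases "K = 0")
        case True then show ?thesis using x nh by auto
      next
        case False then show ?thesis using cw K0 by (intro mult_right_mono) auto
      qed
      finally have "n + (\<Sum>i\<in>w. h i) \<le> (int s + 1) * K - 1 - int s"
        using n by (simp add: algebra_simps)
      then show ?thesis using s0 n KL by auto
    qed
    then show "x \<in> cfg s L (\<lambda>_. 0)" unfolding cfg_def nh using h by (auto simp: PiE_def Pi_def)
  qed
  have "card ({0..<K} \<times> ({0..<s} \<rightarrow>\<^sub>E {0..<K})) \<le> card (cfg s L (\<lambda>_. 0))"
    using sub cfg_finite by (rule card_mono[rotated])
  moreover have "card ({0..<K} \<times> ({0..<s} \<rightarrow>\<^sub>E {0..<K})) = nat K ^ Suc s"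
    by (simp add: card_cartesian_product card_PiE)
  ultimately show ?thesis by (metis of_nat_le_iff of_nat_power)
qed



theorem corollary2p4:
  fixes s :: nat
  assumes "s \<ge> 2"
  shows "\<exists>c>0. (\<lambda>L. gowers_A s L) \<in> O(\<lambda>L. 2 powr (- c * real L))"
proof -
  have s1: "s \<ge> 1" using assms by simp
  obtain m :: "nat \<Rightarrow> nat" where Q: "(\<Prod>w\<in>Pow {0..<s}. thue_morse (\<Sum>i\<in>w. int (m i))) = -1"
    using witness[OF s1] by blast
  define p where "p = Suc s"
  define q where "q = (\<Sum>i<s. m i)"
  have pp: "int s + 1 < 2^p"
  proof -
    have "Suc s < 2^Suc s" by (rule less_exp)
    then have "int (Suc s) < int (2^Suc s)" by linarith
    then show ?thesis unfolding p_def by simp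
  qed
  have qq: "(\<Sum>i<s. m i) < 2^q" unfolding q_def by (rule less_exp)
  define j where "j = p + q"
  have j1: "j \<ge> 1" unfolding j_def p_def by simp
  define B :: int where "B = 2^(p+q)"
  define N :: real where "N = real (card (Idx s B))"
  have N: "N = 2^(j * Suc s)"
  proof -
    have "card (Idx s B) = nat B ^ Suc s" using card_Idx[of B s] unfolding B_def by simp
    also have "nat B = 2^j" unfolding B_def j_def by (simp add: nat_power_eq)
    finally show ?thesis unfolding N_def by (simp add: power_add power_mult)
  qed
  have N4: "N \<ge> 4"
  proof -
    have "1 * 2 \<le> j * Suc s" using j1 s1 by (intro mult_le_mono) auto
    then have "j * Suc s \<ge> 2" by simp
    then have "(2::real)^2 \<le> 2^(j * Suc s)" by (intro power_increasing) auto
    then show ?thesis using N by simp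
  qed
  define D where "D = N - 2"
  have D0: "D \<ge> 0" using N4 unfolding D_def by simp
  define \<rho> where "\<rho> = D / N"
  have \<rho>0: "\<rho> > 0" and \<rho>1: "\<rho> < 1" using N4 unfolding \<rho>_def D_def by (auto simp: field_simps)
  have Drho: "D = \<rho> * N" unfolding \<rho>_def using N4 by simp
  define c where "c = - log 2 \<rho> / real j"
  have c0: "c > 0"
  proof -
    have "log 2 \<rho> < 0" using \<rho>0 \<rho>1 by simp
    moreover have "real j > 0" using j1 by simp
    ultimately show ?thesis unfolding c_def by (simp add: divide_neg_pos)
  qed
  define C where "C = (2 * (real s + 1)) ^ Suc s / \<rho>"
  have bound: "\<bar>gowers_A s L\<bar> \<le> C * 2 powr (- c * real L)" if L: "L \<ge> 2 * (s + 1)" for L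
  proof -
    define k where "k = L div j"
    define i where "i = L mod j"
    have Lki: "L = i + k * j" unfolding i_def k_def by simp
    have Dd: "D = real (card (Idx s B)) - 2" unfolding D_def N_def ..
    have T0: "\<bar>T s (i + k * (p+q)) (\<lambda>_. 0)\<bar> \<le> D^k * 2^(Suc s * i)"
      by (rule iter[OF Q pp qq B_def Dd D0 zero_Sset])
    have T: "\<bar>T s L (\<lambda>_. 0)\<bar> \<le> D^k * 2^(Suc s * i)"
      using T0 Lki unfolding j_def by simp
    define K :: int where "K = 2^L div (int s + 1)"
    have KK: "(int s + 1) * K \<ge> 2^L - int s" unfolding K_def
      using mult_div_mod_eq[of "int s + 1" "2^L"] pos_mod_bound[of "int s + 1" "2^L"] by linarith
    have L2: "(2::real)^L \<ge> 2 * real s + 2"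
    proof -
      have "L < 2^L" by (rule less_exp)
      then have "real L < 2^L" by (metis of_nat_less_iff of_nat_numeral of_nat_power)
      moreover have "real (2 * (s + 1)) \<le> real L" using L by (simp only: of_nat_le_iff)
      moreover have "real (2 * (s + 1)) = 2 * real s + 2" by simp
      ultimately show ?thesis by linarith
    qed
    have Kr: "real_of_int K \<ge> 2^L / (2 * (real s + 1))"
    proof -
      have "(real s + 1) * real_of_int K \<ge> 2^L - real s"
      proof -
        have "real_of_int (2^L - int s) \<le> real_of_int ((int s + 1) * K)" using KK by (simp only: of_int_le_iff)
        then show ?thesis by simp
      qed
      moreover obtain Y where Y: "Y = (real s + 1) * real_of_int K" by blast
      moreover obtain Z :: real where Z: "Z = 2^L" by blast
      ultimately have "Y \<ge> Z / 2" using L2 by linarith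
      then have "(real s + 1) * real_of_int K \<ge> 2^L / 2" using Y Z by simp
      then show ?thesis by (simp add: field_simps)
    qed
    have Kpos: "2^L / (2 * (real s + 1)) > 0" by simp
    have card: "real (card (cfg s L (\<lambda>_. 0))) \<ge> (2^L / (2 * (real s + 1))) ^ Suc s"
    proof -
      have "(2^L / (2 * (real s + 1))) ^ Suc s \<le> (real (nat K)) ^ Suc s"
        using Kr Kpos by (intro power_mono) auto
      then show ?thesis using card_lower[of L s] unfolding K_def by linarith
    qed
    have cardpos: "real (card (cfg s L (\<lambda>_. 0))) > 0"
      using card Kpos by (meson less_le_trans zero_less_power)
    have "\<bar>gowers_A s L\<bar> = \<bar>T s L (\<lambda>_. 0)\<bar> / real (card (cfg s L (\<lambda>_. 0)))"
      unfolding gowers_T by simp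
    also have "\<dots> \<le> (D^k * 2^(Suc s * i)) / (2^L / (2 * (real s + 1))) ^ Suc s"
      using T card cardpos Kpos by (intro frac_le) auto
    also have "D^k * 2^(Suc s * i) = \<rho>^k * 2^(Suc s * L)"
    proof -
      have "D^k * 2^(Suc s * i) = \<rho>^k * (N^k * 2^(Suc s * i))" unfolding Drho by (simp add: power_mult_distrib)
      also have "N^k * 2^(Suc s * i) = (2::real)^(Suc s * L)"
        unfolding N Lki by (simp add: power_mult[symmetric] power_add[symmetric] algebra_simps)
      finally show ?thesis .
    qed
    also have "(2^L / (2 * (real s + 1))) ^ Suc s = (2::real)^(Suc s * L) / (2 * (real s + 1)) ^ Suc s"
      by (simp add: power_divide power_mult[symmetric] power_add mult.commute)
    also have "\<rho>^k * 2^(Suc s * L) / ((2::real)^(Suc s * L) / (2 * (real s + 1)) ^ Suc s) = \<rho>^k * (2 * (real s + 1)) ^ Suc s"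
      by simp
    also have "\<rho>^k \<le> 2 powr (- c * real L) / \<rho>"
    proof -
      have "\<rho>^k = \<rho> powr real k" using \<rho>0 by (simp add: powr_realpow)
      also have "\<dots> \<le> \<rho> powr (real L / real j - 1)"
      proof (rule powr_mono')
        have "real L = real i + real k * real j" using Lki by simp
        moreover have "real i < real j" unfolding i_def using j1 by simp
        ultimately have "real L / real j < real k + 1" using j1 by (simp add: field_simps)
        then show "real L / real j - 1 \<le> real k" by simp
      qed (use \<rho>0 \<rho>1 in auto)
      also have "\<dots> = \<rho> powr (real L / real j) / \<rho>" using \<rho>0 by (simp add: powr_diff)
      also have "\<rho> powr (real L / real j) = 2 powr (- c * real L)"
      proof -
        have "2 powr (- c * real L) = 2 powr (log 2 \<rho> * (real L / real j))"
          unfolding c_def using j1 by (simp add: field_simps)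
        also have "\<dots> = (2 powr log 2 \<rho>) powr (real L / real j)" by (simp add: powr_powr)
        also have "\<dots> = \<rho> powr (real L / real j)" using \<rho>0 by simp
        finally show ?thesis by simp
      qed
      finally show ?thesis .
    qed
    then have "\<rho>^k * (2 * (real s + 1)) ^ Suc s \<le> 2 powr (- c * real L) / \<rho> * (2 * (real s + 1)) ^ Suc s"
      by (intro mult_right_mono) auto
    also have "\<dots> = C * 2 powr (- c * real L)" unfolding C_def by simp
    finally show ?thesis .
  qed
  have "(\<lambda>L. gowers_A s L) \<in> O(\<lambda>L. 2 powr (- c * real L))"
  proof (rule bigoI[where c = C])
    show "eventually (\<lambda>L. norm (gowers_A s L) \<le> C * norm (2 powr (- c * real L))) at_top"
      using bound by (auto simp: eventually_at_top_linorder intro!: exI[of _ "2 * (s + 1)"])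
  qed
  then show ?thesis using c0 by blast
qed

end
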